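(* Let $(X,\alpha)$ be a Cantor minimal system and let $c:X\to\mathbb{Z}_2$ be a continuous map. Suppose $PS(\alpha)\neq PS(\alpha\times c)$. Then there exists $n\in\mathbb{N}$ such that $2^{n-1}\in PS(\alpha)$, $2^n\notin PS(\alpha)$ and $PS(\alpha\times c)=2PS(\alpha)\cup PS(\alpha)$. Furthermore, if $f\in C(X,\mathbb{Z})$ satisfies $2^{n-1}[f]=[1_X]$ in $K^0(X,\alpha)$, then $[c]=[f]+2K^0(X,\alpha)$ in $K^0(X,\alpha)/2K^0(X,\alpha)$.
   Context: A Cantor minimal system $(X,\alpha)$ is a Cantor set $X$ with a homeomorphism $\alpha$ having no nontrivial closed invariant subsets. $\mathbb{N}=\{1,2,\dots\}$. $\alpha\times c$ is the homeomorphism $(x,k)\mapsto(\alpha(x),k+c(x))$ of $X\times\mathbb{Z}_2$. $K^0(X,\alpha)=C(X,\mathbb{Z})/\{f-f\circ\alpha^{-1}:f\in C(X,\mathbb{Z})\}$ with class $[f]$; $K^0(X,\alpha)/2K^0(X,\alpha)$ is identified with $C(X,\mathbb{Z}_2)/\{f-f\circ\alpha^{-1}:f\in C(X,\mathbb{Z}_2)\}$, and $[c]$ is the class of $c$ (equivalently, the class mod $2K^0$ of the $\{0,1\}$-valued integer lift of $c$). For a homeomorphism $\gamma$ of a compact space $Z$, the periodic spectrum $PS(\gamma)$ is the set of $p\in\mathbb{N}$ for which there is a clopen $U\subset Z$ with $U,\gamma(U),\dots,\gamma^{p-1}(U)$ pairwise disjoint and covering $Z$. $2PS(\alpha)=\{2p:p\in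 PS(\alpha)\}$. *)

theory Defs
  imports "HOL-Analysis.Analysis"
begin

definition cantor_set :: "'a::metric_space set \<Rightarrow> bool" where
  "cantor_set X \<longleftrightarrow> X \<noteq> {} \<and> compact X \<and> (\<forall>x\<in>X. x islimpt X) \<and>
     (\<forall>S. S \<subseteq> X \<and> connected S \<longrightarrow> (\<exists>x. S \<subseteq> {x}))"

definition cantor_minimal_system :: "'a::metric_space set \<Rightarrow> ('a \<Rightarrow> 'a) \<Rightarrow> bool" where
  "cantor_minimal_system X \<alpha> \<longleftrightarrow> cantor_set X \<and>
     (\<exists>\<beta>. homeomorphism X X \<alpha> \<beta>) \<and>
     (\<forall>Y. Y \<subseteq> X \<and> closed Y \<and> \<alpha> ` Y = Y \<longrightarrow> Y = {} \<or> Y = X)"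

definition periodic_spectrum :: "'b::topological_space set \<Rightarrow> ('b \<Rightarrow> 'b) \<Rightarrow> nat set" where
  "periodic_spectrum Z \<gamma> = {p. p \<ge> 1 \<and> (\<exists>U. openin (top_of_set Z) U \<and> closedin (top_of_set Z) U \<and>
      (\<forall>i<p. \<forall>j<p. i \<noteq> j \<longrightarrow> (\<gamma> ^^ i) ` U \<inter> (\<gamma> ^^ j) ` U = {}) \<and>
      (\<Union>i<p. (\<gamma> ^^ i) ` U) = Z)}"

text \<open>The skew product alpha x c on X x Z_2, with Z_2 = {0,1} :: int set.\<close>
definition skew :: "('a \<Rightarrow> 'a) \<Rightarrow> ('a \<Rightarrow> int) \<Rightarrow> 'a \<times> int \<Rightarrow> 'a \<times> int" where
  "skew \<alpha> c = (\<lambda>(x,k). (\<alpha> x, (k + c x) mod 2))"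

definition coboundary :: "'a::topological_space set \<Rightarrow> ('a \<Rightarrow> 'a) \<Rightarrow> ('a \<Rightarrow> int) \<Rightarrow> bool" where
  "coboundary X \<alpha> g \<longleftrightarrow> (\<exists>h::'a \<Rightarrow> int. continuous_on X h \<and>
      (\<forall>x\<in>X. g x = h x - h (inv_into X \<alpha> x)))"

text \<open>Equality of classes [f] = [g] in K^0(X,alpha).\<close>
definition K0_eq :: "'a::topological_space set \<Rightarrow> ('a \<Rightarrow> 'a) \<Rightarrow> ('a \<Rightarrow> int) \<Rightarrow> ('a \<Rightarrow> int) \<Rightarrow> bool" where
  "K0_eq X \<alpha> f g \<longleftrightarrow> coboundary X \<alpha> (\<lambda>x. f x - g x)"

text \<open>Equality of classes in K^0(X,alpha)/2K^0(X,alpha):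
  f - g \<in> 2 C(X,Z) + coboundaries.\<close>
definition K0_mod2_eq :: "'a::topological_space set \<Rightarrow> ('a \<Rightarrow> 'a) \<Rightarrow> ('a \<Rightarrow> int) \<Rightarrow> ('a \<Rightarrow> int) \<Rightarrow> bool" where
  "K0_mod2_eq X \<alpha> f g \<longleftrightarrow> (\<exists>u::'a \<Rightarrow> int. continuous_on X u \<and>
      coboundary X \<alpha> (\<lambda>x. f x - g x - 2 * u x))"

end

theory Submission
  imports Defs
begin


lemma cont_int_fun:
  fixes f :: "'b::topological_space \<Rightarrow> int" and \<phi> :: "int \<Rightarrow> int"
  assumes "continuous_on S f"
  shows "continuous_on S (\<lambda>x. \<phi> (f x))"
  using continuous_on_compose[OF assms, of \<phi>] continuous_on_discrete by (simp add: o_def)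

lemma iter_in: "g ` S \<subseteq> S \<Longrightarrow> z \<in> S \<Longrightarrow> (g^^i) z \<in> S"
  by (induction i) auto

lemma iter_cont:
  assumes "continuous_on S g" "g ` S \<subseteq> S"
  shows "continuous_on S (g^^i)"
proof (induction i)
  case 0 then show ?case by (simp add: continuous_on_id)
next
  case (Suc i)
  have "(g^^i) ` S \<subseteq> S" using iter_in[OF assms(2)] by auto
  then have "continuous_on S (g \<circ> (g^^i))"
    using continuous_on_compose[OF Suc continuous_on_subset[OF assms(1)]] by blast
  then show ?case by simp
qed

lemma iter_surj: "g ` S = S \<Longrightarrow> y \<in> S \<Longrightarrow> \<exists>z\<in>S. (g^^i) z = y"
proof (induction i arbitrary: y)
  case 0 then show ?case by auto
next
  case (Suc i)
  have "y \<in> g ` S" using Suc.prems by simp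
  then obtain y' where y': "y' \<in> S" "g y' = y" by (rule imageE) auto
  obtain z where z: "z \<in> S" "(g^^i) z = y'" using Suc.IH[OF Suc.prems(1) y'(1)] by blast
  have "(g^^Suc i) z = y" using z y' by simp
  then show ?case using z(1) by blast
qed

lemma tower_imp_ps:
  fixes \<Lambda> :: "'b::topological_space \<Rightarrow> int"
  assumes gS: "g ` S = S" and p: "p \<ge> 1" and cL: "continuous_on S \<Lambda>"
    and tw: "\<forall>z\<in>S. int p dvd \<Lambda> (g z) - \<Lambda> z - 1"
  shows "p \<in> periodic_spectrum S g"
proof -
  define U where "U = S \<inter> \<Lambda> -` {v. v mod int p = 0}"
  have oU: "openin (top_of_set S) U" unfolding U_def
    by (rule continuous_openin_preimage_gen[OF cL open_discrete])
  have cU: "closedin (top_of_set S) U" unfolding U_def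
    by (rule continuous_closedin_preimage[OF cL]) (simp add: closed_def open_discrete)
  have gSS: "g ` S \<subseteq> S" using gS by simp
  have it: "(g^^i) z \<in> S \<and> int p dvd \<Lambda> ((g^^i) z) - \<Lambda> z - int i" if "z \<in> S" for z i
  proof (induction i)
    case 0 show ?case using that by simp
  next
    case (Suc i)
    then have a: "(g^^i) z \<in> S" and b: "int p dvd \<Lambda> ((g^^i) z) - \<Lambda> z - int i" by auto
    have c: "int p dvd \<Lambda> (g ((g^^i) z)) - \<Lambda> ((g^^i) z) - 1" using tw a by blast
    have eq: "\<Lambda> ((g^^Suc i) z) - \<Lambda> z - int (Suc i) = (\<Lambda> (g ((g^^i) z)) - \<Lambda> ((g^^i) z) - 1) + (\<Lambda> ((g^^i) z) - \<Lambda> z - int i)" by simp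
    have d2: "int p dvd \<Lambda> ((g^^Suc i) z) - \<Lambda> z - int (Suc i)"
      unfolding eq by (rule dvd_add[OF c b])
    have s2: "(g^^Suc i) z \<in> S" using a gSS by auto
    show ?case using d2 s2 by blast
  qed
  have img: "(g^^i) ` U = {z\<in>S. \<Lambda> z mod int p = int i mod int p}" for i
  proof
    show "(g^^i) ` U \<subseteq> {z\<in>S. \<Lambda> z mod int p = int i mod int p}"
    proof
      fix y assume "y \<in> (g^^i) ` U"
      then obtain z where z: "z \<in> U" "y = (g^^i) z" by blast
      then have zS: "z \<in> S" and z0: "int p dvd \<Lambda> z" unfolding U_def by auto
      from it[OF zS, of i] z have yS: "y \<in> S" and d: "int p dvd \<Lambda> y - \<Lambda> z - int i" by auto
      have "int p dvd (\<Lambda> y - \<Lambda> z - int i) + \<Lambda> z" using d z0 by (rule dvd_add)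
      then have "\<Lambda> y mod int p = int i mod int p" by (simp add: mod_eq_dvd_iff)
      with yS show "y \<in> {z\<in>S. \<Lambda> z mod int p = int i mod int p}" by simp
    qed
    show "{z\<in>S. \<Lambda> z mod int p = int i mod int p} \<subseteq> (g^^i) ` U"
    proof
      fix y assume "y \<in> {z\<in>S. \<Lambda> z mod int p = int i mod int p}"
      then have yS: "y \<in> S" and ym: "int p dvd \<Lambda> y - int i" by (auto simp: mod_eq_dvd_iff)
      obtain z where zS: "z \<in> S" and zy: "(g^^i) z = y" using iter_surj[OF gS yS] by blast
      from it[OF zS, of i] zy have d: "int p dvd \<Lambda> y - \<Lambda> z - int i" by auto
      have "int p dvd (\<Lambda> y - int i) - (\<Lambda> y - \<Lambda> z - int i)" using ym d by (rule dvd_diff)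
      then have "int p dvd \<Lambda> z" by simp
      then have "z \<in> U" unfolding U_def using zS by auto
      then show "y \<in> (g^^i) ` U" using zy by blast
    qed
  qed
  have small: "int i mod int p = int i" if "i < p" for i
    using that by simp
  have dis: "\<forall>i<p. \<forall>j<p. i \<noteq> j \<longrightarrow> (g^^i) ` U \<inter> (g^^j) ` U = {}"
  proof (intro allI impI)
    fix i j assume ij: "i < p" "j < p" "i \<noteq> j"
    then have neq: "int i mod int p \<noteq> int j mod int p" using small by simp
    show "(g^^i) ` U \<inter> (g^^j) ` U = {}"
    proof (rule equals0I)
      fix y assume "y \<in> (g^^i) ` U \<inter> (g^^j) ` U"
      then have "\<Lambda> y mod int p = int i mod int p" "\<Lambda> y mod int p = int j mod int p"
        unfolding img by blast+
      then show False using neq by simp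
    qed
  qed
  have cov: "(\<Union>i<p. (g^^i) ` U) = S"
  proof
    show "(\<Union>i<p. (g^^i) ` U) \<subseteq> S" unfolding img by blast
    show "S \<subseteq> (\<Union>i<p. (g^^i) ` U)"
    proof
      fix y assume yS: "y \<in> S"
      define i where "i = nat (\<Lambda> y mod int p)"
      have i1: "int i = \<Lambda> y mod int p" unfolding i_def using p by simp
      have "\<Lambda> y mod int p < int p" using p by simp
      then have i2: "i < p" using i1 by linarith
      have "y \<in> (g^^i) ` U" using yS i1 i2 small by (simp add: img)
      then show "y \<in> (\<Union>i<p. (g^^i) ` U)" using i2 by blast
    qed
  qed
  show ?thesis unfolding periodic_spectrum_def mem_Collect_eq
    by (intro conjI exI[of _ U] p oU cU dis cov)
qed



lemma ps_imp_tower: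
  fixes S :: "'b::t2_space set"
  assumes cS: "compact S" and cg: "continuous_on S g" and gS: "g ` S = S" and ig: "inj_on g S"
    and pP: "p \<in> periodic_spectrum S g"
  shows "\<exists>\<Lambda>::'b \<Rightarrow> int. continuous_on S \<Lambda> \<and> (\<forall>z\<in>S. int p dvd \<Lambda> (g z) - \<Lambda> z - 1)"
proof -
  from pP obtain U where p1: "p \<ge> 1" and oU: "openin (top_of_set S) U" and cU: "closedin (top_of_set S) U"
    and dis: "\<forall>i<p. \<forall>j<p. i \<noteq> j \<longrightarrow> (g^^i) ` U \<inter> (g^^j) ` U = {}"
    and cov: "(\<Union>i<p. (g^^i) ` U) = S"
    unfolding periodic_spectrum_def by blast
  define T where "T i = (g^^i) ` U" for i
  have US: "U \<subseteq> S" using cU closedin_imp_subset by blast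
  have gSS: "g ` S \<subseteq> S" using gS by simp
  have TS: "T i \<subseteq> S" for i unfolding T_def using US iter_in[OF gSS] by blast
  have TSuc: "T (Suc i) = g ` T i" for i unfolding T_def by (simp add: image_comp)
  have cT: "closed (T i)" for i
  proof -
    have "closed S" using cS compact_imp_closed by blast
    then have "closed U" using cU closedin_closed_trans by blast
    then have "compact (S \<inter> U)" using cS compact_Int_closed by blast
    then have cpU: "compact U" using US by (simp add: Int_absorb1)
    have "continuous_on U (g^^i)" using iter_cont[OF cg gSS] US continuous_on_subset by blast
    then have "compact (T i)" unfolding T_def using cpU compact_continuous_image by blast
    then show ?thesis by (rule compact_imp_closed)
  qed
  have Tdis: "T i \<inter> T j = {}" if "i<p" "j<p" "i\<noteq>j" for i j
    using dis that unfolding T_def by blast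
  have Tcov: "\<exists>i<p. z \<in> T i" if "z \<in> S" for z
    using cov that unfolding T_def by blast
  have oT: "openin (top_of_set S) (T i)" if "i<p" for i
  proof -
    have "T i = S - (\<Union>j\<in>{j. j<p \<and> j\<noteq>i}. T j)"
    proof
      show "T i \<subseteq> S - (\<Union>j\<in>{j. j<p \<and> j\<noteq>i}. T j)" using Tdis TS that by blast
      show "S - (\<Union>j\<in>{j. j<p \<and> j\<noteq>i}. T j) \<subseteq> T i" using Tcov by blast
    qed
    moreover have "closedin (top_of_set S) (\<Union>j\<in>{j. j<p \<and> j\<noteq>i}. T j)"
    proof (rule closed_subset)
      show "(\<Union>j\<in>{j. j<p \<and> j\<noteq>i}. T j) \<subseteq> S" using TS by blast
      show "closed (\<Union>j\<in>{j. j<p \<and> j\<noteq>i}. T j)" by (rule closed_UN) (auto simp: cT)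
    qed
    ultimately show ?thesis by (metis openin_diff openin_subtopology_self)
  qed
  define \<Lambda> where "\<Lambda> z = int (LEAST i. z \<in> T i)" for z
  have \<Lambda>eq: "\<Lambda> z = int i" if "i<p" "z \<in> T i" for z i
  proof -
    have "(LEAST i. z \<in> T i) = i"
    proof (rule Least_equality)
      show "z \<in> T i" by fact
      fix k assume k: "z \<in> T k"
      show "i \<le> k"
      proof (rule ccontr)
        assume "\<not> i \<le> k"
        then have "k < i" by simp
        then show False using Tdis[of k i] that k by auto
      qed
    qed
    then show ?thesis unfolding \<Lambda>_def by simp
  qed
  have Tp: "T p \<subseteq> T 0"
  proof
    fix y assume y: "y \<in> T p"
    have "y \<in> S" using y TS by blast
    then obtain k where k: "k<p" "y \<in> T k" using Tcov by blast
    show "y \<in> T 0"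
    proof (cases k)
      case 0 then show ?thesis using k by simp
    next
      case (Suc k')
      have pS: "p = Suc (p - 1)" using p1 by simp
      have "y \<in> g ` T (p - 1)" using y TSuc[of "p-1"] pS by simp
      then obtain a where a: "a \<in> T (p-1)" "y = g a" by blast
      have "y \<in> g ` T k'" using k Suc TSuc by simp
      then obtain b where b: "b \<in> T k'" "y = g b" by blast
      have "a = b" using a b TS ig unfolding inj_on_def by blast
      moreover have "k' < p" "k' \<noteq> p - 1" using k Suc by auto
      ultimately show ?thesis using Tdis[of "p-1" k'] a b p1 by auto
    qed
  qed
  have step: "int p dvd \<Lambda> (g z) - \<Lambda> z - 1" if zS: "z \<in> S" for z
  proof -
    obtain i where i: "i<p" "z \<in> T i" using Tcov zS by blast
    have gz: "g z \<in> T (Suc i)" using i TSuc by simp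
    show ?thesis
    proof (cases "Suc i < p")
      case True
      then have "\<Lambda> (g z) - \<Lambda> z - 1 = 0" using \<Lambda>eq[OF True gz] \<Lambda>eq[OF i] by simp
      then show ?thesis by simp
    next
      case False
      then have ip: "Suc i = p" using i by simp
      then have "g z \<in> T 0" using gz Tp by auto
      then have "\<Lambda> (g z) = 0" using \<Lambda>eq[of 0 "g z"] p1 by simp
      then have "\<Lambda> (g z) - \<Lambda> z - 1 = - int p" using \<Lambda>eq[OF i] ip by simp
      then show ?thesis by simp
    qed
  qed
  have cont: "continuous_on S \<Lambda>"
  proof (subst continuous_on_open_gen[of \<Lambda> S UNIV])
    show "\<Lambda> \<in> S \<rightarrow> UNIV" by simp
    show "\<forall>V. openin (top_of_set UNIV) V \<longrightarrow> openin (top_of_set S) (S \<inter> \<Lambda> -` V)"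
    proof (intro allI impI)
      fix V :: "int set"
      have "S \<inter> \<Lambda> -` V = \<Union> (T ` {i. i<p \<and> int i \<in> V})"
      proof
        show "S \<inter> \<Lambda> -` V \<subseteq> \<Union> (T ` {i. i<p \<and> int i \<in> V})"
        proof
          fix z assume z: "z \<in> S \<inter> \<Lambda> -` V"
          then obtain i where i: "i<p" "z \<in> T i" using Tcov by blast
          then have "int i \<in> V" using z \<Lambda>eq by auto
          then show "z \<in> \<Union> (T ` {i. i<p \<and> int i \<in> V})" using i by blast
        qed
        show "\<Union> (T ` {i. i<p \<and> int i \<in> V}) \<subseteq> S \<inter> \<Lambda> -` V"
          using TS \<Lambda>eq by auto
      qed
      moreover have "openin (top_of_set S) (\<Union> (T ` {i. i<p \<and> int i \<in> V}))"
        by (rule openin_Union) (auto intro: oT)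
      ultimately show "openin (top_of_set S) (S \<inter> \<Lambda> -` V)" by simp
    qed
  qed
  show ?thesis using cont step by blast
qed



lemma mod2_cases: "(v::int) mod 2 = 0 \<or> v mod 2 = 1" by presburger
lemma mod2_back: "k = 0 \<or> k = 1 \<Longrightarrow> ((k - (v::int)) mod 2 + v) mod 2 = k" by presburger
lemma mod2_inj: "k = 0 \<or> k = 1 \<Longrightarrow> l = 0 \<or> l = 1 \<Longrightarrow> (k + (v::int)) mod 2 = (l + v) mod 2 \<Longrightarrow> k = l" by presburger
lemma mod2_ex: "\<exists>t. (k + (v::int)) mod 2 - k + v = 2 * t" by presburger

lemma cont_int_bin:
  fixes f g :: "'b::topological_space \<Rightarrow> int" and F :: "int \<Rightarrow> int \<Rightarrow> int"
  assumes cf: "continuous_on S f" and cg: "continuous_on S g"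
  shows "continuous_on S (\<lambda>x. F (f x) (g x))"
proof (subst continuous_on_open_gen[of _ S UNIV])
  show "(\<lambda>x. F (f x) (g x)) \<in> S \<rightarrow> UNIV" by simp
  show "\<forall>V. openin (top_of_set UNIV) V \<longrightarrow> openin (top_of_set S) (S \<inter> (\<lambda>x. F (f x) (g x)) -` V)"
  proof (intro allI impI)
    fix V :: "int set"
    have eq: "S \<inter> (\<lambda>x. F (f x) (g x)) -` V =
       \<Union> ((\<lambda>(a,b). (S \<inter> f -` {a}) \<inter> (S \<inter> g -` {b})) ` {(a,b). F a b \<in> V})"
      by auto
    have "openin (top_of_set S) ((S \<inter> f -` {a}) \<inter> (S \<inter> g -` {b}))" for a b
      by (intro openin_Int continuous_openin_preimage_gen[OF cf open_discrete]
            continuous_openin_preimage_gen[OF cg open_discrete])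
    then show "openin (top_of_set S) (S \<inter> (\<lambda>x. F (f x) (g x)) -` V)"
      unfolding eq by (intro openin_Union) auto
  qed
qed

lemma ps_dvd:
  fixes S :: "'b::t2_space set"
  assumes cS: "compact S" and cg: "continuous_on S g" and gS: "g ` S = S" and ig: "inj_on g S"
    and pP: "p \<in> periodic_spectrum S g" and d: "d dvd p"
  shows "d \<in> periodic_spectrum S g"
proof -
  obtain \<Lambda> :: "'b \<Rightarrow> int" where c: "continuous_on S \<Lambda>" and t: "\<forall>z\<in>S. int p dvd \<Lambda> (g z) - \<Lambda> z - 1"
    using ps_imp_tower[OF cS cg gS ig pP] by blast
  have "p \<ge> 1" using pP unfolding periodic_spectrum_def by simp
  then have d1: "d \<ge> 1" using d dvd_pos_nat[of p d] by simp
  have "int d dvd int p" using d by simp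
  then have "\<forall>z\<in>S. int d dvd \<Lambda> (g z) - \<Lambda> z - 1" using t dvd_trans by blast
  then show ?thesis using tower_imp_ps[OF gS d1 c] by blast
qed

lemma oddpart: "(p::nat) > 0 \<Longrightarrow> \<exists>k m. p = 2^k * m \<and> odd m"
proof (induction p rule: less_induct)
  case (less p)
  show ?case
  proof (cases "odd p")
    case True then show ?thesis by (intro exI[of _ 0] exI[of _ p]) simp
  next
    case False
    then obtain p' where p': "p = 2 * p'" by blast
    then have "p' < p" "p' > 0" using less.prems by auto
    then obtain k m where "p' = 2^k * m" "odd m" using less.IH by blast
    then show ?thesis using p' by (intro exI[of _ "Suc k"] exI[of _ m]) simp
  qed
qed

locale skewctx =
  fixes X :: "'a::metric_space set" and \<alpha> \<beta> :: "'a \<Rightarrow> 'a" and c :: "'a \<Rightarrow> int"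
  assumes cms: "cantor_minimal_system X \<alpha>" and hom: "homeomorphism X X \<alpha> \<beta>"
    and cc: "continuous_on X c" and c01: "c ` X \<subseteq> {0,1}"
begin

lemma cpX: "compact X" and neX: "X \<noteq> {}"
  using cms unfolding cantor_minimal_system_def cantor_set_def by auto

lemma aX: "\<alpha> ` X = X" and ca: "continuous_on X \<alpha>" and cb: "continuous_on X \<beta>"
  and ba: "x \<in> X \<Longrightarrow> \<beta> (\<alpha> x) = x" and ab: "x \<in> X \<Longrightarrow> \<alpha> (\<beta> x) = x"
  and bX: "\<beta> ` X = X"
  using hom unfolding homeomorphism_def by auto

lemma ain: "x \<in> X \<Longrightarrow> \<alpha> x \<in> X" using aX by blast
lemma bin: "x \<in> X \<Longrightarrow> \<beta> x \<in> X" using bX by blast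

lemma ia: "inj_on \<alpha> X" by (metis ba inj_onI)

lemma inv_eq: "x \<in> X \<Longrightarrow> inv_into X \<alpha> x = \<beta> x"
  by (metis ab bin ia inv_into_f_f)

lemma c01': "x \<in> X \<Longrightarrow> c x = 0 \<or> c x = 1" using c01 by blast

lemma minimal: "Y \<subseteq> X \<Longrightarrow> closed Y \<Longrightarrow> \<alpha> ` Y = Y \<Longrightarrow> Y = {} \<or> Y = X"
  using cms unfolding cantor_minimal_system_def by blast

lemma conta: "continuous_on X h \<Longrightarrow> continuous_on X (\<lambda>x. h (\<alpha> x))"
  using continuous_on_compose2[OF _ ca, of X h] aX by blast

lemma inv_const:
  fixes g :: "'a \<Rightarrow> int"
  assumes cg: "continuous_on X g" and inv: "\<forall>x\<in>X. g (\<alpha> x) = g x" and x: "x \<in> X" and y: "y \<in> X"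
  shows "g x = g y"
proof -
  define Y where "Y = {z\<in>X. g z = g y}"
  have clX: "closed X" using cpX compact_imp_closed by blast
  have "closed Y" unfolding Y_def by (rule continuous_closed_preimage_constant[OF cg clX])
  moreover have "\<alpha> ` Y = Y"
  proof
    show "\<alpha> ` Y \<subseteq> Y" unfolding Y_def using inv ain by auto
    show "Y \<subseteq> \<alpha> ` Y"
    proof
      fix z assume z: "z \<in> Y"
      then have "\<beta> z \<in> Y" unfolding Y_def using inv bin ab by (metis (mono_tags, lifting) mem_Collect_eq)
      then show "z \<in> \<alpha> ` Y" using ab z unfolding Y_def by (metis (no_types, lifting) image_eqI mem_Collect_eq)
    qed
  qed
  moreover have "Y \<subseteq> X" "y \<in> Y" unfolding Y_def using y by auto
  ultimately have "Y = X" using minimal by blast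
  then show ?thesis using x unfolding Y_def by blast
qed

lemma TF:
  fixes h :: "'a \<Rightarrow> int" and k :: int
  assumes k: "k > 0" and ch: "continuous_on X h" and d: "\<forall>x\<in>X. k dvd h (\<alpha> x) - h x"
  shows "\<exists>s. continuous_on X s \<and> (\<forall>x\<in>X. h (\<alpha> x) - h x = k * (s (\<alpha> x) - s x))"
proof -
  obtain x0 where x0: "x0 \<in> X" using neX by blast
  have cm: "continuous_on X (\<lambda>x. h x mod k)" by (rule cont_int_fun[OF ch])
  have "\<forall>x\<in>X. h (\<alpha> x) mod k = h x mod k" using d by (simp add: mod_eq_dvd_iff)
  then have C: "h x mod k = h x0 mod k" if "x \<in> X" for x
    using inv_const[OF cm _ that x0] by blast
  define s where "s x = h x div k" for x
  have cs: "continuous_on X s" unfolding s_def by (rule cont_int_fun[OF ch])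
  have "h (\<alpha> x) - h x = k * (s (\<alpha> x) - s x)" if x: "x \<in> X" for x
  proof -
    have "h (\<alpha> x) = k * s (\<alpha> x) + h x0 mod k" using C[OF ain[OF x]] unfolding s_def
      by (metis mult_div_mod_eq)
    moreover have "h x = k * s x + h x0 mod k" using C[OF x] unfolding s_def
      by (metis mult_div_mod_eq)
    ultimately show ?thesis by (simp add: algebra_simps)
  qed
  then show ?thesis using cs by blast
qed

end



context skewctx begin

abbreviation "Z \<equiv> X \<times> {0::int, 1}"
abbreviation "\<gamma> \<equiv> skew \<alpha> c"
abbreviation "PP \<equiv> periodic_spectrum X \<alpha>"
abbreviation "QQ \<equiv> periodic_spectrum Z \<gamma>"

lemma g_eq: "\<gamma> (x, k) = (\<alpha> x, (k + c x) mod 2)" by (simp add: skew_def)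

lemma cpZ: "compact Z"
  by (rule compact_Times[OF cpX]) simp

lemma cgZ: "continuous_on Z \<gamma>"
proof -
  have eq: "\<gamma> = (\<lambda>z. (\<alpha> (fst z), (snd z + c (fst z)) mod 2))"
    by (auto simp: skew_def fun_eq_iff)
  have f: "fst ` Z \<subseteq> X" by auto
  have c1: "continuous_on Z (\<lambda>z. \<alpha> (fst z))"
    using continuous_on_compose2[OF ca continuous_on_fst[OF continuous_on_id] f] .
  have c2: "continuous_on Z (\<lambda>z. c (fst z))"
    using continuous_on_compose2[OF cc continuous_on_fst[OF continuous_on_id] f] .
  have c3: "continuous_on Z (\<lambda>z. (snd z + c (fst z)) mod 2)"
    using cont_int_bin[OF continuous_on_snd[OF continuous_on_id] c2, where F="\<lambda>a b. (a + b) mod 2"] by simp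
  show ?thesis unfolding eq by (intro continuous_on_Pair c1 c3)
qed

lemma gZ: "\<gamma> ` Z = Z"
proof
  show "\<gamma> ` Z \<subseteq> Z"
  proof
    fix w assume "w \<in> \<gamma> ` Z"
    then obtain x k where xk: "x \<in> X" "k \<in> {0,1}" "w = \<gamma> (x,k)" by blast
    have "(k + c x) mod 2 \<in> {0,1}" using mod2_cases[of "k + c x"] by blast
    moreover have "\<alpha> x \<in> X" using ain xk(1) .
    ultimately show "w \<in> Z" unfolding xk(3) g_eq by blast
  qed
  show "Z \<subseteq> \<gamma> ` Z"
  proof
    fix w assume w: "w \<in> Z"
    then obtain y k where yk: "y \<in> X" "k = 0 \<or> k = 1" "w = (y,k)" by blast
    define x where "x = \<beta> y"
    have xX: "x \<in> X" unfolding x_def using bin yk(1) .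
    have ax: "\<alpha> x = y" unfolding x_def using ab yk(1) .
    have km: "(k - c x) mod 2 \<in> {0,1}" using mod2_cases[of "k - c x"] by blast
    have "\<gamma> (x, (k - c x) mod 2) = (y, k)" unfolding g_eq ax using mod2_back[OF yk(2)] by simp
    moreover have "(x, (k - c x) mod 2) \<in> Z" using xX km by blast
    ultimately show "w \<in> \<gamma> ` Z" using yk(3) by (metis image_eqI)
  qed
qed

lemma igZ: "inj_on \<gamma> Z"
proof (rule inj_onI)
  fix z w assume z: "z \<in> Z" and w: "w \<in> Z" and e: "\<gamma> z = \<gamma> w"
  obtain x k where xk: "x \<in> X" "k \<in> {0,1}" "z = (x,k)" using z by blast
  obtain y l where yl: "y \<in> X" "l \<in> {0,1}" "w = (y,l)" using w by blast
  have "\<alpha> x = \<alpha> y" and m: "(k + c x) mod 2 = (l + c y) mod 2" using e xk yl g_eq by auto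
  then have xy: "x = y" using ia xk yl unfolding inj_on_def by blast
  have m': "(k + c x) mod 2 = (l + c x) mod 2" using m xy by simp
  have "k = 0 \<or> k = 1" "l = 0 \<or> l = 1" using xk(2) yl(2) by auto
  then have "k = l" using m' mod2_inj by blast
  then show "z = w" using xy xk yl by simp
qed

lemma L1: "p \<in> PP \<Longrightarrow> p \<in> QQ"
proof -
  assume pP: "p \<in> PP"
  obtain l :: "'a \<Rightarrow> int" where lc: "continuous_on X l" and lt: "\<forall>x\<in>X. int p dvd l (\<alpha> x) - l x - 1"
    using ps_imp_tower[OF cpX ca aX ia pP] by blast
  have p1: "p \<ge> 1" using pP unfolding periodic_spectrum_def by simp
  have f: "fst ` Z \<subseteq> X" by auto
  have c1: "continuous_on Z (\<lambda>z. l (fst z))"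
    using continuous_on_compose2[OF lc continuous_on_fst[OF continuous_on_id] f] .
  have "\<forall>z\<in>Z. int p dvd l (fst (\<gamma> z)) - l (fst z) - 1"
    using lt g_eq by auto
  then show "p \<in> QQ" using tower_imp_ps[OF gZ p1 c1] by simp
qed

lemma PdvdX: "p \<in> PP \<Longrightarrow> d dvd p \<Longrightarrow> d \<in> PP"
  using ps_dvd[OF cpX ca aX ia] by blast

lemma QdvdZ: "p \<in> QQ \<Longrightarrow> d dvd p \<Longrightarrow> d \<in> QQ"
  using ps_dvd[OF cpZ cgZ gZ igZ] by blast

lemma Llcm: assumes pP: "p \<in> PP" and qP: "q \<in> PP" shows "lcm p q \<in> PP"
proof -
  obtain l1 :: "'a \<Rightarrow> int" where c1: "continuous_on X l1" and t1: "\<forall>x\<in>X. int p dvd l1 (\<alpha> x) - l1 x - 1"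
    using ps_imp_tower[OF cpX ca aX ia pP] by blast
  obtain l2 :: "'a \<Rightarrow> int" where c2: "continuous_on X l2" and t2: "\<forall>x\<in>X. int q dvd l2 (\<alpha> x) - l2 x - 1"
    using ps_imp_tower[OF cpX ca aX ia qP] by blast
  have p1: "p \<ge> 1" using pP unfolding periodic_spectrum_def by simp
  have q1: "q \<ge> 1" using qP unfolding periodic_spectrum_def by simp
  define G where "G = gcd (int p) (int q)"
  obtain a b where ab: "a * int p + b * int q = G" unfolding G_def using bezout_int by blast
  have Gp: "G > 0" unfolding G_def using p1 by simp
  define u where "u = int p div G"
  define v where "v = int q div G"
  have pu: "int p = G * u" unfolding u_def G_def by simp
  have qv: "int q = G * v" unfolding v_def G_def by simp
  have "G * (a * u + b * v) = G * 1" using ab pu qv by (simp add: algebra_simps)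
  then have abuv: "a * u + b * v = 1" using Gp by simp
  define M where "M = G * u * v"
  have LM: "int (lcm p q) dvd M"
  proof -
    have "int p dvd M" "int q dvd M" unfolding M_def using pu qv by (simp_all add: mult.assoc mult.left_commute)
    then have "lcm (int p) (int q) dvd M" by (rule lcm_least)
    then show ?thesis by simp
  qed
  define l where "l x = (a * u) * l2 x + (b * v) * l1 x" for x
  have cl: "continuous_on X l" unfolding l_def
    by (rule cont_int_bin[OF c2 c1, where F="\<lambda>s t. (a * u) * s + (b * v) * t"])
  have "int (lcm p q) dvd l (\<alpha> x) - l x - 1" if x: "x \<in> X" for x
  proof -
    have e: "l (\<alpha> x) - l x - 1 = (a * u) * (l2 (\<alpha> x) - l2 x - 1) + (b * v) * (l1 (\<alpha> x) - l1 x - 1)"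
      unfolding l_def using abuv by (simp add: algebra_simps)
    have "M dvd (a * u) * (l2 (\<alpha> x) - l2 x - 1)"
    proof -
      have "int q * u dvd (l2 (\<alpha> x) - l2 x - 1) * u" using t2 x by (simp add: mult_dvd_mono)
      then have "M dvd (l2 (\<alpha> x) - l2 x - 1) * u" unfolding M_def using qv by (simp add: algebra_simps)
      then have "M dvd a * ((l2 (\<alpha> x) - l2 x - 1) * u)" by (rule dvd_mult)
      moreover have "(a * u) * (l2 (\<alpha> x) - l2 x - 1) = a * ((l2 (\<alpha> x) - l2 x - 1) * u)" by (simp add: algebra_simps)
      ultimately show ?thesis by metis
    qed
    moreover have "M dvd (b * v) * (l1 (\<alpha> x) - l1 x - 1)"
    proof -
      have "int p * v dvd (l1 (\<alpha> x) - l1 x - 1) * v" using t1 x by (simp add: mult_dvd_mono)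
      then have "M dvd (l1 (\<alpha> x) - l1 x - 1) * v" unfolding M_def using pu by (simp add: algebra_simps)
      then have "M dvd b * ((l1 (\<alpha> x) - l1 x - 1) * v)" by (rule dvd_mult)
      moreover have "(b * v) * (l1 (\<alpha> x) - l1 x - 1) = b * ((l1 (\<alpha> x) - l1 x - 1) * v)" by (simp add: algebra_simps)
      ultimately show ?thesis by metis
    qed
    ultimately have "M dvd l (\<alpha> x) - l x - 1" unfolding e by (rule dvd_add)
    then show ?thesis using LM dvd_trans by blast
  qed
  moreover have "lcm p q \<ge> 1" using lcm_pos_nat[of p q] p1 q1 by simp
  ultimately show ?thesis using tower_imp_ps[OF aX _ cl] by blast
qed

end



context skewctx begin

lemma L2:
  assumes qQ: "q \<in> QQ" and qP: "q \<notin> PP"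
  shows "\<exists>p l. q = 2*p \<and> p \<ge> 1 \<and> continuous_on X l \<and>
           (\<forall>x\<in>X. int (2*p) dvd l (\<alpha> x) - l x - 1 - int p * c x)"
proof -
  obtain \<Lambda> :: "'a \<times> int \<Rightarrow> int" where Lc: "continuous_on Z \<Lambda>"
    and Lt: "\<forall>z\<in>Z. int q dvd \<Lambda> (\<gamma> z) - \<Lambda> z - 1"
    using ps_imp_tower[OF cpZ cgZ gZ igZ qQ] by blast
  have q1: "q \<ge> 1" using qQ unfolding periodic_spectrum_def by simp
  define Qi where "Qi = int q"
  have Qp: "Qi > 0" using q1 Qi_def by simp
  define L0 where "L0 x = \<Lambda> (x, 0)" for x
  define L1 where "L1 x = \<Lambda> (x, 1)" for x
  have cL: "continuous_on X (\<lambda>x. \<Lambda> (x, k))" if "k \<in> {0,1}" for k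
  proof -
    have "continuous_on X (\<lambda>x. (x, k))" by (intro continuous_on_Pair continuous_on_id continuous_on_const)
    moreover have "(\<lambda>x. (x,k)) ` X \<subseteq> Z" using that by auto
    ultimately show ?thesis using continuous_on_compose2[OF Lc] by blast
  qed
  have cL0: "continuous_on X L0" unfolding L0_def using cL by simp
  have cL1: "continuous_on X L1" unfolding L1_def using cL by simp
  have t0: "Qi dvd \<Lambda> (\<gamma> (x,k)) - \<Lambda> (x,k) - 1" if "x \<in> X" "k \<in> {0,1}" for x k
    using Lt that Qi_def by auto
  have rel0: "Qi dvd L0 (\<alpha> x) - L0 x - 1 \<and> Qi dvd L1 (\<alpha> x) - L1 x - 1" if "x\<in>X" "c x = 0" for x
    using t0[OF that(1), of 0] t0[OF that(1), of 1] that(2) g_eq unfolding L0_def L1_def by simp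
  have rel1: "Qi dvd L1 (\<alpha> x) - L0 x - 1 \<and> Qi dvd L0 (\<alpha> x) - L1 x - 1" if "x\<in>X" "c x = 1" for x
    using t0[OF that(1), of 0] t0[OF that(1), of 1] that(2) g_eq unfolding L0_def L1_def by simp
  define e where "e x = (L1 x - L0 x) mod Qi" for x
  have e0: "e (\<alpha> x) = e x" if "x\<in>X" "c x = 0" for x
  proof -
    have eq: "(L1 (\<alpha> x) - L0 (\<alpha> x)) - (L1 x - L0 x) = (L1 (\<alpha> x) - L1 x - 1) - (L0 (\<alpha> x) - L0 x - 1)"
      by simp
    have "Qi dvd (L1 (\<alpha> x) - L0 (\<alpha> x)) - (L1 x - L0 x)"
      unfolding eq using rel0[OF that] by (blast intro: dvd_diff)
    then show ?thesis unfolding e_def by (simp only: mod_eq_dvd_iff)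
  qed
  have e1: "e (\<alpha> x) = (- e x) mod Qi" if "x\<in>X" "c x = 1" for x
  proof -
    have eq: "(L1 (\<alpha> x) - L0 (\<alpha> x)) - (- (L1 x - L0 x)) = (L1 (\<alpha> x) - L0 x - 1) - (L0 (\<alpha> x) - L1 x - 1)"
      by simp
    have "Qi dvd (L1 (\<alpha> x) - L0 (\<alpha> x)) - (- (L1 x - L0 x))"
      unfolding eq using rel1[OF that] by (blast intro: dvd_diff)
    then have "(L1 (\<alpha> x) - L0 (\<alpha> x)) mod Qi = (- (L1 x - L0 x)) mod Qi" by (simp only: mod_eq_dvd_iff)
    moreover have "(- e x) mod Qi = (- (L1 x - L0 x)) mod Qi" unfolding e_def by (simp add: mod_minus_eq)
    ultimately show ?thesis unfolding e_def by simp
  qed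
  have emod: "e x mod Qi = e x" for x unfolding e_def by simp
  have mm: "(- ((- v) mod Qi)) mod Qi = v mod Qi" for v by (simp add: mod_minus_eq)
  define G where "G x = min (e x) ((- e x) mod Qi)" for x
  have cG: "continuous_on X G" unfolding G_def e_def
    by (rule cont_int_bin[OF cL1 cL0, where F="\<lambda>a b. min ((a - b) mod Qi) ((- ((a - b) mod Qi)) mod Qi)"])
  have Ginv: "\<forall>x\<in>X. G (\<alpha> x) = G x"
  proof
    fix x assume x: "x \<in> X"
    from c01'[OF x] show "G (\<alpha> x) = G x"
    proof
      assume "c x = 0" then show ?thesis using e0[OF x] unfolding G_def by simp
    next
      assume c1: "c x = 1"
      have "G (\<alpha> x) = min ((- e x) mod Qi) (e x mod Qi)" unfolding G_def using e1[OF x c1] mm by simp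
      then show ?thesis unfolding G_def using emod by (simp add: min.commute)
    qed
  qed
  obtain x0 where x0: "x0 \<in> X" using neX by blast
  define G0 where "G0 = G x0"
  have GG: "G x = G0" if "x \<in> X" for x using inv_const[OF cG Ginv that x0] G0_def by simp
  have G0r: "0 \<le> G0" "G0 < Qi" unfolding G0_def G_def e_def using Qp by (simp_all add: min_def)
  have ealt: "e x = G0 \<or> e x = (- G0) mod Qi" if x: "x \<in> X" for x
  proof (cases "e x \<le> (- e x) mod Qi")
    case True
    then have "G x = e x" unfolding G_def by simp
    then show ?thesis using GG[OF x] by simp
  next
    case False
    then have "G x = (- e x) mod Qi" unfolding G_def by simp
    then have "(- e x) mod Qi = G0" using GG[OF x] by simp
    then have "(- G0) mod Qi = e x mod Qi" using mm[of "e x"] by simp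
    then show ?thesis using emod by simp
  qed
  show ?thesis
  proof (cases "G0 = (- G0) mod Qi")
    case False
    define l where "l x = (if e x = G0 then L0 x else L1 x)" for x
    have cl: "continuous_on X l" unfolding l_def e_def
      by (rule cont_int_bin[OF cL1 cL0, where F="\<lambda>a b. if (a - b) mod Qi = G0 then b else a"])
    have "\<forall>x\<in>X. int q dvd l (\<alpha> x) - l x - 1"
    proof
      fix x assume x: "x \<in> X"
      from c01'[OF x] show "int q dvd l (\<alpha> x) - l x - 1"
      proof
        assume c0: "c x = 0"
        then show ?thesis using rel0[OF x c0] e0[OF x c0] unfolding l_def Qi_def by auto
      next
        assume c1: "c x = 1"
        show ?thesis
        proof (cases "e x = G0")
          case True
          then have "e (\<alpha> x) \<noteq> G0" using e1[OF x c1] False by simp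
          then show ?thesis using rel1[OF x c1] True unfolding l_def Qi_def by simp
        next
          case ne: False
          then have "e x = (- G0) mod Qi" using ealt[OF x] by simp
          then have "e (\<alpha> x) = G0 mod Qi" using e1[OF x c1] mm by simp
          also have "G0 mod Qi = G0" using G0r by simp
          finally show ?thesis using rel1[OF x c1] ne unfolding l_def Qi_def by simp
        qed
      qed
    qed
    then have "q \<in> PP" using tower_imp_ps[OF aX q1 cl] by blast
    then show ?thesis using qP by simp
  next
    case True
    then have eG: "e x = G0" if "x \<in> X" for x using ealt[OF that] by auto
    show ?thesis
    proof (cases "G0 = 0")
      case G00: True
      have "\<forall>x\<in>X. int q dvd L0 (\<alpha> x) - L0 x - 1"
      proof
        fix x assume x: "x \<in> X"
        have d: "Qi dvd L1 x - L0 x" using eG[OF x] G00 unfolding e_def by (simp add: dvd_eq_mod_eq_0)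
        from c01'[OF x] show "int q dvd L0 (\<alpha> x) - L0 x - 1"
        proof
          assume c0: "c x = 0" then show ?thesis using rel0[OF x c0] unfolding Qi_def by blast
        next
          assume c1: "c x = 1"
          have "Qi dvd (L0 (\<alpha> x) - L1 x - 1) + (L1 x - L0 x)" using rel1[OF x c1] d by (blast intro: dvd_add)
          moreover have eq: "(L0 (\<alpha> x) - L1 x - 1) + (L1 x - L0 x) = L0 (\<alpha> x) - L0 x - 1" by simp
          ultimately have "Qi dvd L0 (\<alpha> x) - L0 x - 1" by simp
          then show ?thesis unfolding Qi_def .
        qed
      qed
      then have "q \<in> PP" using tower_imp_ps[OF aX q1 cL0] by blast
      then show ?thesis using qP by simp
    next
      case G0n: False
      have Gpos: "0 < G0" using G0r G0n by simp
      have "(- G0) mod Qi = (Qi - G0) mod Qi" by (simp add: mod_eq_dvd_iff)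
      also have "\<dots> = Qi - G0" by (rule mod_pos_pos_trivial) (use Gpos G0r in auto)
      finally have "G0 = Qi - G0" using True by simp
      then have QG: "Qi = 2 * G0" by simp
      define p where "p = nat G0"
      have pG: "int p = G0" using Gpos p_def by simp
      have q2p: "q = 2 * p" using QG pG Qi_def by simp
      have Q2: "int (2*p) = Qi" using q2p Qi_def by simp
      have "\<forall>x\<in>X. int (2*p) dvd L0 (\<alpha> x) - L0 x - 1 - int p * c x"
      proof
        fix x assume x: "x \<in> X"
        have "(L1 x - L0 x) mod Qi = G0 mod Qi" using eG[OF x] G0r unfolding e_def by simp
        then have d: "Qi dvd (L1 x - L0 x) - G0" by (simp only: mod_eq_dvd_iff)
        from c01'[OF x] show "int (2*p) dvd L0 (\<alpha> x) - L0 x - 1 - int p * c x"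
        proof
          assume c0: "c x = 0" then show ?thesis using rel0[OF x c0] Q2 by simp
        next
          assume c1: "c x = 1"
          have "Qi dvd (L0 (\<alpha> x) - L1 x - 1) + ((L1 x - L0 x) - G0)" using rel1[OF x c1] d by (blast intro: dvd_add)
          moreover have "(L0 (\<alpha> x) - L1 x - 1) + ((L1 x - L0 x) - G0) = L0 (\<alpha> x) - L0 x - 1 - int p * c x"
            using c1 pG by simp
          ultimately show ?thesis using Q2 by simp
        qed
      qed
      moreover have "p \<ge> 1" using Gpos p_def by simp
      ultimately show ?thesis using q2p cL0 by blast
    qed
  qed
qed

lemma L4:
  assumes L1: "L \<ge> 1" and cl: "continuous_on X l"
    and K: "\<forall>x\<in>X. int (2*L) dvd l (\<alpha> x) - l x - 1 - int L * c x"
  shows "2*L \<in> QQ"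
proof -
  define \<Lambda> where "\<Lambda> z = l (fst z) + int L * snd z" for z :: "'a \<times> int"
  have f: "fst ` Z \<subseteq> X" by auto
  have c1: "continuous_on Z (\<lambda>z. l (fst z))"
    using continuous_on_compose2[OF cl continuous_on_fst[OF continuous_on_id] f] .
  have cL: "continuous_on Z \<Lambda>" unfolding \<Lambda>_def
    by (rule cont_int_bin[OF c1 continuous_on_snd[OF continuous_on_id], where F="\<lambda>a b. a + int L * b"])
  have "\<forall>z\<in>Z. int (2*L) dvd \<Lambda> (\<gamma> z) - \<Lambda> z - 1"
  proof
    fix z assume z: "z \<in> Z"
    then obtain x k where xk: "x \<in> X" "k = 0 \<or> k = 1" "z = (x,k)" by blast
    have cx: "c x = 0 \<or> c x = 1" using c01' xk by blast
    obtain t where t: "(k + c x) mod 2 - k + c x = 2 * t" using mod2_ex by blast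
    have "\<Lambda> (\<gamma> z) - \<Lambda> z - 1 = (l (\<alpha> x) - l x - 1 - int L * c x) + int L * ((k + c x) mod 2 - k + c x)"
      unfolding \<Lambda>_def using xk g_eq by (simp add: algebra_simps)
    also have "\<dots> = (l (\<alpha> x) - l x - 1 - int L * c x) + int (2*L) * t" using t by simp
    finally have eqn2: "\<Lambda> (\<gamma> z) - \<Lambda> z - 1 = (l (\<alpha> x) - l x - 1 - int L * c x) + int (2*L) * t" .
    have D: "int (2*L) dvd l (\<alpha> x) - l x - 1 - int L * c x" using K xk(1) by blast
    show "int (2*L) dvd \<Lambda> (\<gamma> z) - \<Lambda> z - 1" unfolding eqn2 by (rule dvd_add[OF D]) simp
  qed
  moreover have "2*L \<ge> 1" using L1 by simp
  ultimately show ?thesis using tower_imp_ps[OF gZ _ cL] by blast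
qed

lemma KJ:
  assumes p1: "p \<ge> 1" and K: "\<forall>x\<in>X. int (2*p) dvd l (\<alpha> x) - l x - 1 - int p * c x" and x: "x \<in> X"
  shows "int p * ((l (\<alpha> x) - l x - 1) div int p) = l (\<alpha> x) - l x - 1"
    and "2 dvd (l (\<alpha> x) - l x - 1) div int p - c x"
proof -
  have a: "int p dvd l (\<alpha> x) - l x - 1 - int p * c x"
    using K x dvd_trans[of "int p" "int (2*p)"] by auto
  have "int p dvd (l (\<alpha> x) - l x - 1 - int p * c x) + int p * c x" using a by (rule dvd_add) simp
  then have pd: "int p dvd l (\<alpha> x) - l x - 1" by simp
  then show e: "int p * ((l (\<alpha> x) - l x - 1) div int p) = l (\<alpha> x) - l x - 1" by simp
  have eqk: "l (\<alpha> x) - l x - 1 - int p * c x = int p * ((l (\<alpha> x) - l x - 1) div int p - c x)"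
    using e by (simp add: algebra_simps)
  obtain w where w: "l (\<alpha> x) - l x - 1 - int p * c x = int (2*p) * w" using K x unfolding dvd_def by blast
  then have "int p * ((l (\<alpha> x) - l x - 1) div int p - c x) = int p * (2 * w)" using eqk by simp
  then have "(l (\<alpha> x) - l x - 1) div int p - c x = 2 * w" using p1 by simp
  then show "2 dvd (l (\<alpha> x) - l x - 1) div int p - c x" by simp
qed

lemma Kt:
  assumes p1: "p \<ge> 1" and cl: "continuous_on X l"
    and K: "\<forall>x\<in>X. int (2*p) dvd l (\<alpha> x) - l x - 1 - int p * c x"
  shows "p \<in> PP"
proof -
  have "\<forall>x\<in>X. int p dvd l (\<alpha> x) - l x - 1"
    using KJ(1)[OF p1 K] by (metis dvd_triv_left)
  then show ?thesis using tower_imp_ps[OF aX p1 cl] by blast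
qed

end



context skewctx begin

lemma L5:
  assumes p1: "p \<ge> 1" and cl: "continuous_on X l"
    and K: "\<forall>x\<in>X. int (2*p) dvd l (\<alpha> x) - l x - 1 - int p * c x"
    and LP: "L \<in> PP" and pL: "p dvd L" and od: "odd (L div p)"
  shows "2*L \<in> QQ"
proof -
  define r where "r = L div p"
  have Lr: "int L = int p * int r" using pL r_def by (metis dvd_mult_div_cancel of_nat_mult)
  have L1: "L \<ge> 1" using LP unfolding periodic_spectrum_def by simp
  obtain l2 :: "'a \<Rightarrow> int" where c2: "continuous_on X l2" and t2: "\<forall>x\<in>X. int L dvd l2 (\<alpha> x) - l2 x - 1"
    using ps_imp_tower[OF cpX ca aX ia LP] by blast
  define j where "j x = (l (\<alpha> x) - l x - 1) div int p" for x
  define j2 where "j2 x = (l2 (\<alpha> x) - l2 x - 1) div int L" for x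
  have pj: "int p * j x = l (\<alpha> x) - l x - 1" if "x \<in> X" for x
    unfolding j_def using KJ(1)[OF p1 K that] .
  have jc: "2 dvd j x - c x" if "x \<in> X" for x
    unfolding j_def using KJ(2)[OF p1 K that] .
  have Lj: "int L * j2 x = l2 (\<alpha> x) - l2 x - 1" if "x \<in> X" for x
    unfolding j2_def using t2 that by simp
  define h where "h x = l2 x - l x" for x
  have ch: "continuous_on X h" unfolding h_def
    by (rule cont_int_bin[OF c2 cl, where F="\<lambda>a b. a - b"])
  have hd: "h (\<alpha> x) - h x = int p * (int r * j2 x - j x)" if x: "x \<in> X" for x
  proof -
    have "h (\<alpha> x) - h x = (l2 (\<alpha> x) - l2 x - 1) - (l (\<alpha> x) - l x - 1)" unfolding h_def by simp
    also have "\<dots> = int L * j2 x - int p * j x" using Lj[OF x] pj[OF x] by simp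
    finally show ?thesis using Lr by (simp add: algebra_simps)
  qed
  have pp: "int p > 0" using p1 by simp
  obtain s where cs: "continuous_on X s" and sd: "\<forall>x\<in>X. h (\<alpha> x) - h x = int p * (s (\<alpha> x) - s x)"
    using TF[OF pp ch] hd by (metis dvd_triv_left)
  have rj: "int r * j2 x - j x = s (\<alpha> x) - s x" if x: "x \<in> X" for x
    using hd[OF x] sd x pp by auto
  define l' where "l' x = l2 x + int L * s x" for x
  have cl': "continuous_on X l'" unfolding l'_def
    by (rule cont_int_bin[OF c2 cs, where F="\<lambda>a b. a + int L * b"])
  have "\<forall>x\<in>X. int (2*L) dvd l' (\<alpha> x) - l' x - 1 - int L * c x"
  proof
    fix x assume x: "x \<in> X"
    have e: "l' (\<alpha> x) - l' x - 1 - int L * c x = int L * ((1 + int r) * j2 x - (j x - c x) - 2 * c x)"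
    proof -
      have "l' (\<alpha> x) - l' x - 1 - int L * c x = (l2 (\<alpha> x) - l2 x - 1) + int L * (s (\<alpha> x) - s x) - int L * c x"
        unfolding l'_def by (simp add: algebra_simps)
      also have "\<dots> = int L * j2 x + int L * (int r * j2 x - j x) - int L * c x" using Lj[OF x] rj[OF x] by simp
      finally show ?thesis by (simp add: algebra_simps)
    qed
    have "odd (int r)" using od r_def by simp
    then have "2 dvd (1 + int r)" by simp
    then have "2 dvd (1 + int r) * j2 x" by simp
    then have "2 dvd (1 + int r) * j2 x - (j x - c x) - 2 * c x" using jc[OF x] by simp
    then obtain w where w: "(1 + int r) * j2 x - (j x - c x) - 2 * c x = 2 * w" by blast
    show "int (2*L) dvd l' (\<alpha> x) - l' x - 1 - int L * c x" unfolding e w by simp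
  qed
  then show ?thesis using L4[OF L1 cl'] by blast
qed

lemma main:
  assumes ne: "PP \<noteq> QQ"
  shows "\<exists>n::nat. n \<ge> 1 \<and> 2 ^ (n - 1) \<in> PP \<and> 2 ^ n \<notin> PP \<and>
           QQ = (\<lambda>p. 2 * p) ` PP \<union> PP \<and>
           (\<forall>f::'a \<Rightarrow> int. continuous_on X f \<and>
              K0_eq X \<alpha> (\<lambda>x. 2 ^ (n - 1) * f x) (\<lambda>x. 1)
              \<longrightarrow> K0_mod2_eq X \<alpha> c f)"
proof -
  have PQ: "PP \<subseteq> QQ" using L1 by blast
  obtain q where qQ: "q \<in> QQ" and qP: "q \<notin> PP" using ne PQ by blast
  obtain p l where q2: "q = 2*p" and p1: "p \<ge> 1" and cl: "continuous_on X l"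
    and K: "\<forall>x\<in>X. int (2*p) dvd l (\<alpha> x) - l x - 1 - int p * c x"
    using L2[OF qQ qP] by blast
  have pP: "p \<in> PP" using Kt[OF p1 cl K] .
  have p2: "2*p \<notin> PP" using qP q2 by simp
  obtain k m where pkm: "p = 2^k * m" and om: "odd m" using oddpart[of p] p1 by auto
  have A1: "2^k \<in> PP" using PdvdX[OF pP] pkm by simp
  have A2: "2^Suc k \<notin> PP"
  proof
    assume a: "2^Suc k \<in> PP"
    have lP: "lcm (2^Suc k) p \<in> PP" using Llcm[OF a pP] .
    have "2^Suc k * m dvd lcm (2^Suc k) p"
    proof (rule divides_mult)
      show "2^Suc k dvd lcm (2^Suc k) p" by simp
      show "m dvd lcm (2^Suc k) p" using pkm dvd_trans[of m p "lcm (2^Suc k) p"] by simp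
      show "coprime ((2::nat)^Suc k) m" using om by simp
    qed
    moreover have e: "2*p = 2^Suc k * m" using pkm by simp
    ultimately have "2*p dvd lcm (2^Suc k) p" by metis
    then have "2*p \<in> PP" by (rule PdvdX[OF lP])
    then show False using p2 by simp
  qed
  have QE: "QQ = (\<lambda>p. 2 * p) ` PP \<union> PP"
  proof
    show "QQ \<subseteq> (\<lambda>p. 2 * p) ` PP \<union> PP"
    proof
      fix q' assume q': "q' \<in> QQ"
      show "q' \<in> (\<lambda>p. 2 * p) ` PP \<union> PP"
      proof (cases "q' \<in> PP")
        case True then show ?thesis by simp
      next
        case False
        obtain p' l' where "q' = 2*p'" "p' \<ge> 1" "continuous_on X l'"
          "\<forall>x\<in>X. int (2*p') dvd l' (\<alpha> x) - l' x - 1 - int p' * c x"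
          using L2[OF q' False] by blast
        then show ?thesis using Kt by blast
      qed
    qed
    show "(\<lambda>p. 2 * p) ` PP \<union> PP \<subseteq> QQ"
    proof
      fix q' assume "q' \<in> (\<lambda>p. 2 * p) ` PP \<union> PP"
      then consider "q' \<in> PP" | p' where "p' \<in> PP" "q' = 2 * p'" by blast
      then show "q' \<in> QQ"
      proof cases
        case 1 then show ?thesis using PQ by blast
      next
        case 2
        define L where "L = lcm p p'"
        have LP: "L \<in> PP" unfolding L_def using Llcm[OF pP 2(1)] .
        have pL: "p dvd L" unfolding L_def by simp
        have nd: "\<not> 2^Suc k dvd L" using PdvdX[OF LP] A2 by blast
        have od: "odd (L div p)"
        proof
          assume "even (L div p)"
          then obtain t where t: "L div p = 2 * t" by blast
          have "L = p * (L div p)" using pL by simp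
          also have "\<dots> = 2^Suc k * (m * t)" using pkm t by simp
          finally have "2^Suc k dvd L" by simp
          then show False using nd by simp
        qed
        have "2*L \<in> QQ" using L5[OF p1 cl K LP pL od] .
        moreover have "2*p' dvd 2*L" unfolding L_def by simp
        ultimately show ?thesis using QdvdZ 2(2) by blast
      qed
    qed
  qed
  have K0: "\<forall>f::'a \<Rightarrow> int. continuous_on X f \<and>
              K0_eq X \<alpha> (\<lambda>x. 2 ^ (Suc k - 1) * f x) (\<lambda>x. 1) \<longrightarrow> K0_mod2_eq X \<alpha> c f"
  proof (intro allI impI, elim conjE)
    fix f :: "'a \<Rightarrow> int" assume cf: "continuous_on X f"
      and ke: "K0_eq X \<alpha> (\<lambda>x. 2 ^ (Suc k - 1) * f x) (\<lambda>x. 1)"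
    from ke obtain h where ch: "continuous_on X h"
      and hq: "\<forall>x\<in>X. 2^k * f x - 1 = h x - h (inv_into X \<alpha> x)"
      unfolding K0_eq_def coboundary_def by auto
    define j where "j x = (l (\<alpha> x) - l x - 1) div int p" for x
    have pj: "int p * j x = l (\<alpha> x) - l x - 1" if "x \<in> X" for x
      unfolding j_def using KJ(1)[OF p1 K that] .
    have jc: "2 dvd j x - c x" if "x \<in> X" for x
      unfolding j_def using KJ(2)[OF p1 K that] .
    have cla: "continuous_on X (\<lambda>x. l (\<alpha> x))" using conta[OF cl] .
    have cj: "continuous_on X j" unfolding j_def
      by (rule cont_int_bin[OF cla cl, where F="\<lambda>a b. (a - b - 1) div int p"])
    define H where "H x = h (\<beta> x)" for x
    have cH: "continuous_on X H" unfolding H_def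
      using continuous_on_compose2[OF ch cb] bX by blast
    have HA: "H (\<alpha> x) = h x" if "x \<in> X" for x unfolding H_def using ba that by simp
    have hinv: "h (inv_into X \<alpha> x) = H x" if "x \<in> X" for x unfolding H_def using inv_eq that by simp
    define F where "F x = l x + H x" for x
    have cF: "continuous_on X F" unfolding F_def
      by (rule cont_int_bin[OF cl cH, where F="\<lambda>a b. a + b"])
    have pint: "int p = 2^k * int m" using pkm by simp
    have Fd: "F (\<alpha> x) - F x = 2^k * (int m * j x + f x)" if x: "x \<in> X" for x
    proof -
      have "F (\<alpha> x) - F x = (l (\<alpha> x) - l x - 1) + (h x - h (inv_into X \<alpha> x)) + 1"
        unfolding F_def using HA[OF x] hinv[OF x] by simp
      also have "\<dots> = int p * j x + (2^k * f x - 1) + 1" using pj[OF x] hq x by simp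
      finally show ?thesis using pint by (simp add: algebra_simps)
    qed
    have kp: "(2::int)^k > 0" by simp
    obtain s where cs: "continuous_on X s" and sd: "\<forall>x\<in>X. F (\<alpha> x) - F x = 2^k * (s (\<alpha> x) - s x)"
      using TF[OF kp cF] Fd by (metis dvd_triv_left)
    have ms: "int m * j x + f x = s (\<alpha> x) - s x" if x: "x \<in> X" for x
      using Fd[OF x] sd x by auto
    define u where "u x = (c x - j x) div 2 + ((1 - int m) div 2) * j x - f x" for x
    have cw: "continuous_on X (\<lambda>x. (c x - j x) div 2 + ((1 - int m) div 2) * j x)"
      by (rule cont_int_bin[OF cc cj, where F="\<lambda>a b. (a - b) div 2 + ((1 - int m) div 2) * b"])
    have cu: "continuous_on X u" unfolding u_def
      by (rule cont_int_bin[OF cw cf, where F="\<lambda>a b. a - b"])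
    have ue: "c x - f x - 2 * u x = s (\<alpha> x) - s x" if x: "x \<in> X" for x
    proof -
      have d1: "2 dvd c x - j x" using jc[OF x] by (simp add: dvd_diff_commute)
      have e1: "2 * ((c x - j x) div 2) = c x - j x" using d1 by simp
      have "odd (int m)" using om by simp
      then have d2: "2 dvd 1 - int m" by simp
      have e2: "2 * ((1 - int m) div 2) = 1 - int m" using d2 by simp
      have "c x - f x - 2 * u x = c x - f x - 2 * ((c x - j x) div 2) - 2 * ((1 - int m) div 2) * j x + 2 * f x"
        unfolding u_def by (simp add: algebra_simps)
      also have "\<dots> = int m * j x + f x" unfolding e1 e2 by (simp add: algebra_simps)
      finally show ?thesis using ms[OF x] by simp
    qed
    show "K0_mod2_eq X \<alpha> c f"
      unfolding K0_mod2_eq_def coboundary_def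
    proof (intro exI conjI)
      show "continuous_on X u" by (rule cu)
      show "continuous_on X (\<lambda>x. s (\<alpha> x))" using conta[OF cs] .
      show "\<forall>x\<in>X. c x - f x - 2 * u x = s (\<alpha> x) - s (\<alpha> (inv_into X \<alpha> x))"
        using ue inv_eq ab by simp
    qed
  qed
  show ?thesis
    apply (rule exI[of _ "Suc k"])
    using A1 A2 QE K0 by simp
qed

end

theorem lemma4p6:
  fixes X :: "'a::metric_space set" and \<alpha> :: "'a \<Rightarrow> 'a" and c :: "'a \<Rightarrow> int"
  assumes "cantor_minimal_system X \<alpha>"
    and "continuous_on X c" and "c ` X \<subseteq> {0, 1}"
    and "periodic_spectrum X \<alpha> \<noteq> periodic_spectrum (X \<times> {0, 1}) (skew \<alpha> c)"
  shows "\<exists>n::nat. n \<ge> 1 \<and> 2 ^ (n - 1) \<in> periodic_spectrum X \<alpha> \<and>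
           2 ^ n \<notin> periodic_spectrum X \<alpha> \<and>
           periodic_spectrum (X \<times> {0, 1}) (skew \<alpha> c) =
             (\<lambda>p. 2 * p) ` periodic_spectrum X \<alpha> \<union> periodic_spectrum X \<alpha> \<and>
           (\<forall>f::'a \<Rightarrow> int. continuous_on X f \<and>
              K0_eq X \<alpha> (\<lambda>x. 2 ^ (n - 1) * f x) (\<lambda>x. 1)
              \<longrightarrow> K0_mod2_eq X \<alpha> c f)"
proof -
  obtain \<beta> where hom: "homeomorphism X X \<alpha> \<beta>"
    using assms(1) unfolding cantor_minimal_system_def by blast
  interpret skewctx X \<alpha> \<beta> c
    using assms(1-3) hom by unfold_locales
  show ?thesis using main[OF assms(4)] .
qed


end
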